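(* Let $\sim_{\mathrm{NC}}$ be the equivalence relation on $S_n$ generated by $\sigma\sim_{\mathrm{NC}}\sigma s_i$ whenever $1\le i<n$ and $i\in\{\sigma(i),\sigma(i+1)\}$. Then the equivalence class of $\sim_{\mathrm{NC}}$ containing the identity is exactly $\mathrm{NC}_n$.
   Context: $s_i=(i,i+1)$ and $\sigma s_i=\sigma\circ s_i$. A set partition of $[n]$ is noncrossing if there are no distinct blocks $P,Q$ with $a,b\in P$, $c,d\in Q$, $a<c<b<d$. To a noncrossing partition associate $\sigma\in S_n$ acting on each block $\{a_1<\dots<a_p\}$ by $\sigma(a_j)=a_{j-1}$ ($j\ge2$), $\sigma(a_1)=a_p$; $\mathrm{NC}_n$ is the set of these (noncrossing) permutations. *)

theory Defs
  imports "HOL-Combinatorics.Combinatorics"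
begin

text \<open>Permutations of [n] = {1..n} are functions nat to nat that permute {1..n}
  (identity outside). The simple transposition s_i = (i, i+1); sigma s_i is sigma composed with s_i.\<close>

definition simple_transp :: "nat \<Rightarrow> nat \<Rightarrow> nat" where
  "simple_transp i = Transposition.transpose i (Suc i)"

definition nc_step :: "nat \<Rightarrow> (nat \<Rightarrow> nat) \<Rightarrow> (nat \<Rightarrow> nat) \<Rightarrow> bool" where
  "nc_step n \<sigma> \<tau> \<longleftrightarrow> \<sigma> permutes {1..n} \<and>
     (\<exists>i. 1 \<le> i \<and> i < n \<and> i \<in> {\<sigma> i, \<sigma> (Suc i)} \<and> \<tau> = \<sigma> \<circ> simple_transp i)"

definition nc_equiv :: "nat \<Rightarrow> (nat \<Rightarrow> nat) \<Rightarrow> (nat \<Rightarrow> nat) \<Rightarrow> bool" where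
  "nc_equiv n \<sigma> \<tau> \<longleftrightarrow> \<sigma> permutes {1..n} \<and> \<tau> permutes {1..n} \<and>
     (\<sigma>, \<tau>) \<in> ({(a, b). nc_step n a b} \<union> {(a, b). nc_step n b a})\<^sup>*"

definition set_partition :: "nat \<Rightarrow> nat set set \<Rightarrow> bool" where
  "set_partition n P \<longleftrightarrow> partition_on {1..n} P"

definition noncrossing :: "nat set set \<Rightarrow> bool" where
  "noncrossing P \<longleftrightarrow> \<not> (\<exists>B\<in>P. \<exists>C\<in>P. B \<noteq> C \<and>
      (\<exists>a b c d. a \<in> B \<and> b \<in> B \<and> c \<in> C \<and> d \<in> C \<and> a < c \<and> c < b \<and> b < d))"

definition partition_perm :: "nat set set \<Rightarrow> nat \<Rightarrow> nat" where
  "partition_perm P x =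
     (if \<exists>B\<in>P. x \<in> B then
        (let B = (THE B. B \<in> P \<and> x \<in> B) in
           if \<exists>y\<in>B. y < x then Max {y\<in>B. y < x} else Max B)
      else x)"

definition NC :: "nat \<Rightarrow> (nat \<Rightarrow> nat) set" where
  "NC n = {partition_perm P | P. set_partition n P \<and> noncrossing P}"

end

theory Submission
  imports Defs
begin


definition cp :: "nat set \<Rightarrow> nat \<Rightarrow> nat" where
  "cp B x = (if \<exists>y\<in>B. y < x then Max {y\<in>B. y < x} else Max B)"

lemma part_unique:
  assumes "partition_on A P" "B \<in> P" "C \<in> P" "x \<in> B" "x \<in> C"
  shows "B = C"
  using assms unfolding partition_on_def disjoint_def by blast

lemma pp_block:
  assumes "partition_on A P" "B \<in> P" "x \<in> B"
  shows "partition_perm P x = cp B x"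
proof -
  have "(THE B. B \<in> P \<and> x \<in> B) = B"
    using assms part_unique[OF assms(1)] by (intro the_equality) auto
  then show ?thesis using assms unfolding partition_perm_def cp_def by (auto simp: Let_def)
qed

lemma pp_out:
  assumes "x \<notin> \<Union>P"
  shows "partition_perm P x = x"
  using assms unfolding partition_perm_def by auto

lemma cp_single[simp]: "cp {x} x = x"
  unfolding cp_def by auto

lemma cp_insert_i:
  assumes "finite B" "i \<notin> B" "Suc i \<in> B"
  shows "cp (insert i B) i = cp B (Suc i)"
proof -
  have e: "{y\<in>insert i B. y < i} = {y\<in>B. y < Suc i}"
    using assms by (auto simp: less_Suc_eq)
  have m: "Max (insert i B) = Max B"
  proof -
    have ne: "B \<noteq> {}" using assms by auto
    have "Suc i \<le> Max B" using assms by (simp add: Max_ge)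
    then show ?thesis using ne assms(1) by (simp add: max_def)
  qed
  show ?thesis unfolding cp_def using e m assms by (auto simp: less_Suc_eq)
qed

lemma cp_insert_Suc:
  assumes "finite B" "i \<notin> B" "Suc i \<in> B"
  shows "cp (insert i B) (Suc i) = i"
proof -
  have e: "{y\<in>insert i B. y < Suc i} = insert i {y\<in>B. y < i}"
    using assms by (auto simp: less_Suc_eq)
  have "Max (insert i {y\<in>B. y < i}) = i"
    using assms by (intro Max_eqI) auto
  then show ?thesis unfolding cp_def using e by auto
qed

lemma cp_insert_other:
  assumes "finite B" "i \<notin> B" "Suc i \<in> B" "x \<in> B" "x \<noteq> Suc i"
  shows "cp (insert i B) x = cp B x"
proof (cases "x < i")
  case True
  have e: "{y\<in>insert i B. y < x} = {y\<in>B. y < x}" using True by auto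
  have m: "Max (insert i B) = Max B"
  proof -
    have ne: "B \<noteq> {}" using assms by auto
    have "Suc i \<le> Max B" using assms by (simp add: Max_ge)
    then show ?thesis using ne assms(1) by (simp add: max_def)
  qed
  show ?thesis unfolding cp_def using e m True by auto
next
  case False
  then have gx: "Suc i < x" using assms by (metis Suc_lessI linorder_neqE_nat)
  have e: "{y\<in>insert i B. y < x} = insert i {y\<in>B. y < x}" using gx by auto
  have ne: "Suc i \<in> {y\<in>B. y < x}" using gx assms by auto
  have f: "finite {y\<in>B. y < x}" using assms by auto
  have "Max (insert i {y\<in>B. y < x}) = Max {y\<in>B. y < x}"
  proof -
    have "Suc i \<le> Max {y\<in>B. y < x}" using ne f by (simp add: Max_ge)
    moreover have ne': "{y\<in>B. y < x} \<noteq> {}" using ne by blast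
    ultimately show ?thesis by (subst Max_insert[OF f ne']) (auto simp: max_def)
  qed
  then show ?thesis unfolding cp_def using e ne gx by auto
qed

definition merge :: "nat set set \<Rightarrow> nat \<Rightarrow> nat set \<Rightarrow> nat set set" where
  "merge P i B = insert (insert i B) (P - {{i}, B})"

lemma merge_partition:
  assumes "partition_on A P" "{i} \<in> P" "B \<in> P" "Suc i \<in> B"
  shows "partition_on A (merge P i B)"
proof (rule partition_onI)
  show "\<Union> (merge P i B) = A" using assms partition_onD1[OF assms(1)] unfolding merge_def by auto
  show "{} \<notin> merge P i B" using partition_onD3[OF assms(1)] unfolding merge_def by auto
  fix p q assume pq: "p \<in> merge P i B" "q \<in> merge P i B" "p \<noteq> q"
  have u: "\<And>C D x. C \<in> P \<Longrightarrow> D \<in> P \<Longrightarrow> x \<in> C \<Longrightarrow> x \<in> D \<Longrightarrow> C = D"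
    using part_unique[OF assms(1)] by blast
  have d: "C \<inter> D = {}" if "C \<in> P" "D \<in> P" "C \<noteq> D" for C D
    using u that by blast
  have iB: "i \<notin> B" using u[OF assms(2) assms(3), of i] assms(4) by auto
  have ni: "i \<notin> C" if "C \<in> P" "C \<noteq> {i}" for C using u[OF that(1) assms(2), of i] that by auto
  consider "p = insert i B" "q \<in> P - {{i}, B}" | "q = insert i B" "p \<in> P - {{i}, B}"
    | "p \<in> P - {{i}, B}" "q \<in> P - {{i}, B}"
    using pq unfolding merge_def by blast
  then show "disjnt p q"
  proof cases
    case 1
    then have "q \<inter> B = {}" "i \<notin> q" using d[of q B] ni[of q] assms(3) by auto
    then show ?thesis using 1 unfolding disjnt_def by auto
  next
    case 2
    then have "p \<inter> B = {}" "i \<notin> p" using d[of p B] ni[of p] assms(3) by auto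
    then show ?thesis using 2 unfolding disjnt_def by auto
  next
    case 3
    then show ?thesis using d[of p q] pq(3) unfolding disjnt_def by auto
  qed
qed

lemma merge_pp:
  assumes "partition_on A P" "finite A" "{i} \<in> P" "B \<in> P" "Suc i \<in> B"
  shows "partition_perm (merge P i B) = partition_perm P \<circ> simple_transp i"
proof
  fix x
  let ?Q = "merge P i B"
  have Q: "partition_on A ?Q" using merge_partition assms by blast
  have iB: "i \<notin> B" using part_unique[OF assms(1) assms(3) assms(4), of i] assms by auto
  have fB: "finite B" using assms unfolding partition_on_def by (meson Union_upper finite_subset)
  have BQ: "insert i B \<in> ?Q" unfolding merge_def by auto
  show "partition_perm ?Q x = (partition_perm P \<circ> simple_transp i) x"
  proof -
    consider "x = i" | "x = Suc i" | "x \<in> B" "x \<noteq> Suc i" | C where "C \<in> P" "x \<in> C" "C \<noteq> B" "C \<noteq> {i}"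
      | "x \<notin> \<Union>P" by blast
    then show ?thesis
    proof cases
      case 1
      then show ?thesis using pp_block[OF Q BQ] pp_block[OF assms(1) assms(4) assms(5)] cp_insert_i[OF fB iB assms(5)]
        by (simp add: simple_transp_def)
    next
      case 2
      then show ?thesis using pp_block[OF Q BQ] pp_block[OF assms(1) assms(3)] cp_insert_Suc[OF fB iB assms(5)] assms(5)
        by (simp add: simple_transp_def)
    next
      case 3
      then have "x \<noteq> i" using iB by auto
      then show ?thesis using 3 pp_block[OF Q BQ] pp_block[OF assms(1) assms(4)] cp_insert_other[OF fB iB assms(5)]
        by (simp add: simple_transp_def)
    next
      case 4
      have "x \<noteq> i" "x \<noteq> Suc i" using 4 part_unique[OF assms(1)] assms by blast+
      moreover have "C \<in> ?Q" using 4 unfolding merge_def by auto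
      ultimately show ?thesis using 4 pp_block[OF Q, of C x] pp_block[OF assms(1), of C x]
        by (simp add: simple_transp_def)
    next
      case 5
      have "x \<notin> \<Union>?Q" using 5 assms unfolding merge_def by auto
      moreover have "x \<noteq> i" "x \<noteq> Suc i" using 5 assms by auto
      ultimately show ?thesis using 5 pp_out by (simp add: simple_transp_def)
    qed
  qed
qed


lemma ncD:
  assumes "noncrossing P" "B \<in> P" "C \<in> P" "B \<noteq> C" "a \<in> B" "b \<in> B" "c \<in> C" "d \<in> C"
    "a < c" "c < b" "b < d"
  shows False
proof -
  have ex: "\<exists>a' b' c' d'. a' \<in> B \<and> b' \<in> B \<and> c' \<in> C \<and> d' \<in> C \<and> a' < c' \<and> c' < b' \<and> b' < d'"
    by (rule exI[of _ a], rule exI[of _ b], rule exI[of _ c], rule exI[of _ d]) (simp add: assms)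
  have "\<exists>B\<in>P. \<exists>C\<in>P. B \<noteq> C \<and> (\<exists>a b c d. a \<in> B \<and> b \<in> B \<and> c \<in> C \<and> d \<in> C \<and> a < c \<and> c < b \<and> b < d)"
  proof (rule bexI[of _ B])
    show "\<exists>C\<in>P. B \<noteq> C \<and> (\<exists>a b c d. a \<in> B \<and> b \<in> B \<and> c \<in> C \<and> d \<in> C \<and> a < c \<and> c < b \<and> b < d)"
    proof (rule bexI[of _ C])
      show "B \<noteq> C \<and> (\<exists>a b c d. a \<in> B \<and> b \<in> B \<and> c \<in> C \<and> d \<in> C \<and> a < c \<and> c < b \<and> b < d)"
        using assms(4) ex by (rule conjI)
    qed (rule assms(3))
  qed (rule assms(2))
  then show False using assms(1) unfolding noncrossing_def by (rule notE[rotated])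
qed

lemma merge_nc:
  assumes P: "partition_on A P" and iP: "{i} \<in> P" and BP: "B \<in> P" and sB: "Suc i \<in> B"
    and nc: "noncrossing P"
  shows "noncrossing (merge P i B)"
proof -
  let ?Q = "merge P i B"
  define h where "h u = (if u = i then Suc i else u)" for u
  define g where "g Z = (if Z = insert i B then B else Z)" for Z
  have u: "\<And>C D x. C \<in> P \<Longrightarrow> D \<in> P \<Longrightarrow> x \<in> C \<Longrightarrow> x \<in> D \<Longrightarrow> C = D"
    using part_unique[OF P] by blast
  have iB: "i \<notin> B" using u[OF iP BP, of i] sB by auto
  have oth: "Z \<in> P \<and> i \<notin> Z \<and> Suc i \<notin> Z" if "Z \<in> ?Q" "Z \<noteq> insert i B" for Z
  proof -
    have "Z \<in> P" "Z \<noteq> {i}" "Z \<noteq> B" using that unfolding merge_def by auto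
    then show ?thesis using u[OF _ iP, of Z i] u[OF _ BP, of Z "Suc i"] sB by auto
  qed
  have gP: "g Z \<in> P" if "Z \<in> ?Q" for Z using oth[OF that] BP unfolding g_def by auto
  have hg: "h x \<in> g Z" if "Z \<in> ?Q" "x \<in> Z" for Z x
    using oth[OF that(1)] that sB unfolding g_def h_def by auto
  have hlt: "h x < h y" if "X \<in> ?Q" "Y \<in> ?Q" "X \<noteq> Y" "x \<in> X" "y \<in> Y" "x < y" for X Y x y
  proof (cases "x = i \<or> y = i")
    case True
    then show ?thesis
    proof
      assume xi: "x = i"
      then have "X = insert i B" using oth[OF that(1)] that(4) by auto
      then have "Y \<noteq> insert i B" using that by auto
      then have "y \<noteq> i" "y \<noteq> Suc i" using oth[OF that(2)] that(5) by auto
      then show ?thesis using xi that(6) unfolding h_def by auto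
    next
      assume yi: "y = i"
      then have "Y = insert i B" using oth[OF that(2)] that(5) by auto
      then have "X \<noteq> insert i B" using that by auto
      then have "x \<noteq> i" "x \<noteq> Suc i" using oth[OF that(1)] that(4) by auto
      then show ?thesis using yi that(6) unfolding h_def by auto
    qed
  next
    case False
    then show ?thesis using that unfolding h_def by auto
  qed
  have hlt2: "h x < h y" if "X \<in> ?Q" "Y \<in> ?Q" "X \<noteq> Y" "x \<in> Y" "y \<in> X" "x < y" for X Y x y
    using hlt[OF that(2,1) _ that(4,5,6)] that(3) by auto
  have gne: "g X \<noteq> g Y" if "X \<in> ?Q" "Y \<in> ?Q" "X \<noteq> Y" for X Y
  proof
    assume e: "g X = g Y"
    have "B \<notin> ?Q" using iB unfolding merge_def by auto
    then show False using e that unfolding g_def by (auto split: if_splits)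
  qed
  show ?thesis unfolding noncrossing_def
  proof (rule notI, elim bexE exE conjE)
    fix X Y a b c d
    assume X: "X \<in> ?Q" and Y: "Y \<in> ?Q" and XY: "X \<noteq> Y" and a: "a \<in> X" and b: "b \<in> X"
      and c: "c \<in> Y" and d: "d \<in> Y" and ac: "a < c" and cb: "c < b" and bd: "b < d"
    have "h a < h c" using hlt[OF X Y XY a c ac] .
    moreover have "h c < h b" using hlt2[OF X Y XY c b cb] .
    moreover have "h b < h d" using hlt[OF X Y XY b d bd] .
    ultimately show False by (rule ncD[OF nc gP[OF X] gP[OF Y] gne[OF X Y XY] hg[OF X a] hg[OF X b] hg[OF Y c] hg[OF Y d]])
  qed
qed

definition splitb :: "nat set set \<Rightarrow> nat \<Rightarrow> nat set \<Rightarrow> nat set set" where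
  "splitb P i B = insert (B - {i}) (insert {i} (P - {B}))"

lemma split_facts:
  assumes P: "partition_on A P" and BP: "B \<in> P" and iB: "i \<in> B" and sB: "Suc i \<in> B"
  shows "partition_on A (splitb P i B)" "{i} \<in> splitb P i B" "B - {i} \<in> splitb P i B"
    "Suc i \<in> B - {i}" "merge (splitb P i B) i (B - {i}) = P"
proof -
  have u: "\<And>C D x. C \<in> P \<Longrightarrow> D \<in> P \<Longrightarrow> x \<in> C \<Longrightarrow> x \<in> D \<Longrightarrow> C = D"
    using part_unique[OF P] by blast
  have n1: "{i} \<notin> P - {B}" using u[OF _ BP, of "{i}" i] iB by auto
  have n2: "B - {i} \<notin> P - {B}" using u[OF _ BP, of "B - {i}" "Suc i"] sB by auto
  show "{i} \<in> splitb P i B" "B - {i} \<in> splitb P i B" "Suc i \<in> B - {i}"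
    using sB unfolding splitb_def by auto
  have ne: "B - {i} \<noteq> {i}" by auto
  have "splitb P i B - {{i}, B - {i}} = P - {B}"
    using n1 n2 ne unfolding splitb_def by auto
  then show "merge (splitb P i B) i (B - {i}) = P"
    unfolding merge_def using iB BP by (auto simp: insert_absorb)
  show "partition_on A (splitb P i B)"
  proof (rule partition_onI)
    show "\<Union> (splitb P i B) = A" using partition_onD1[OF P] iB BP unfolding splitb_def by auto
    show "{} \<notin> splitb P i B" using partition_onD3[OF P] sB unfolding splitb_def by auto
    fix p q assume pq: "p \<in> splitb P i B" "q \<in> splitb P i B" "p \<noteq> q"
    have d: "C \<inter> D = {}" if "C \<in> P" "D \<in> P" "C \<noteq> D" for C D
      using u that by blast
    have ni: "i \<notin> C" if "C \<in> P" "C \<noteq> B" for C using u[OF that(1) BP, of i] that iB by auto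
    have cl: "Z = {i} \<or> Z = B - {i} \<or> (Z \<in> P \<and> Z \<noteq> B)" if "Z \<in> splitb P i B" for Z
      using that unfolding splitb_def by auto
    have spB: "Z \<subseteq> B" if "Z = {i} \<or> Z = B - {i}" for Z using that iB by auto
    show "disjnt p q"
    proof (cases "q \<in> P \<and> q \<noteq> B")
      case qP: True
      show ?thesis
      proof (cases "p \<in> P \<and> p \<noteq> B")
        case True
        then show ?thesis using d[of p q] qP pq(3) unfolding disjnt_def by auto
      next
        case False
        then have "p \<subseteq> B" using spB cl[OF pq(1)] by blast
        then show ?thesis using d[of B q] qP BP unfolding disjnt_def by auto
      qed
    next
      case qN: False
      then have qB: "q \<subseteq> B" using spB cl[OF pq(2)] by blast
      show ?thesis
      proof (cases "p \<in> P \<and> p \<noteq> B")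
        case True
        then show ?thesis using d[of p B] qB BP unfolding disjnt_def by auto
      next
        case False
        then have "p = {i} \<or> p = B - {i}" "q = {i} \<or> q = B - {i}" using cl[OF pq(1)] cl[OF pq(2)] qN by auto
        then show ?thesis using pq(3) unfolding disjnt_def by auto
      qed
    qed
  qed
qed

lemma split_nc:
  assumes P: "partition_on A P" and BP: "B \<in> P" and iB: "i \<in> B" and nc: "noncrossing P"
  shows "noncrossing (splitb P i B)"
proof -
  define g where "g Z = (if Z = {i} \<or> Z = B - {i} then B else Z)" for Z
  have gP: "g Z \<in> P" and sub: "Z \<subseteq> g Z" if "Z \<in> splitb P i B" for Z
    using that BP iB unfolding g_def splitb_def by auto
  show ?thesis unfolding noncrossing_def
  proof (rule notI, elim bexE exE conjE)
    fix X Y a b c d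
    assume X: "X \<in> splitb P i B" and Y: "Y \<in> splitb P i B" and XY: "X \<noteq> Y" and a: "a \<in> X" and b: "b \<in> X"
      and c: "c \<in> Y" and d: "d \<in> Y" and ac: "a < c" and cb: "c < b" and bd: "b < d"
    have cl: "Z = {i} \<or> Z = B - {i} \<or> (Z \<in> P \<and> Z \<noteq> B)" if "Z \<in> splitb P i B" for Z
      using that unfolding splitb_def by auto
    have Xi: "X \<noteq> {i}" using a b ac cb by auto
    have Yi: "Y \<noteq> {i}" using c d cb bd by auto
    have gne: "g X \<noteq> g Y"
    proof (cases "X = B - {i}")
      case True
      have YB: "Y \<noteq> B - {i}" using XY True by simp
      then have "Y \<in> P \<and> Y \<noteq> B" using cl[OF Y] Yi by blast
      then show ?thesis using True Yi YB unfolding g_def by auto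
    next
      case False
      then have XP: "X \<in> P \<and> X \<noteq> B" using cl[OF X] Xi by auto
      show ?thesis
      proof (cases "Y = B - {i}")
        case True
        then show ?thesis using XP Xi False unfolding g_def by auto
      next
        case False2: False
        then have "Y \<in> P \<and> Y \<noteq> B" using cl[OF Y] Yi by auto
        then show ?thesis using XP Xi Yi False False2 XY unfolding g_def by auto
      qed
    qed
    have m: "a \<in> g X" "b \<in> g X" "c \<in> g Y" "d \<in> g Y" using sub[OF X] sub[OF Y] a b c d by auto
    show False by (rule ncD[OF nc gP[OF X] gP[OF Y] gne m ac cb bd])
  qed
qed


lemma finite_block: "partition_on {1..(n::nat)} P \<Longrightarrow> B \<in> P \<Longrightarrow> finite B"
  by (metis Union_upper finite_atLeastAtMost finite_subset partition_onD1)

lemma pp_fix: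
  assumes P: "partition_on {1..n} P" and x: "x \<in> {1..n}" and e: "partition_perm P x = x"
  shows "{x} \<in> P"
proof -
  obtain B where B: "B \<in> P" "x \<in> B" using partition_onD1[OF P] x by auto
  have f: "finite B" using finite_block[OF P B(1)] .
  have c: "cp B x = x" using pp_block[OF P B] e by simp
  show ?thesis
  proof (cases "\<exists>y\<in>B. y < x")
    case True
    then have "Max {y\<in>B. y < x} \<in> {y\<in>B. y < x}" using f by (intro Max_in) auto
    then show ?thesis using c True unfolding cp_def by auto
  next
    case False
    then have "Max B = x" using c unfolding cp_def by auto
    have "y = x" if "y \<in> B" for y
    proof -
      have "y \<le> Max B" using f that by simp
      then show ?thesis using False that \<open>Max B = x\<close> by auto
    qed
    then have "B \<subseteq> {x}" by blast
    then have "B = {x}" using B(2) by blast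
    then show ?thesis using B by simp
  qed
qed

lemma pp_pred:
  assumes P: "partition_on {1..n} P" and x: "Suc i \<in> {1..n}" and e: "partition_perm P (Suc i) = i"
  shows "\<exists>B\<in>P. i \<in> B \<and> Suc i \<in> B"
proof -
  have "Suc i \<in> \<Union>P" using partition_onD1[OF P] x by auto
  then obtain B where B: "B \<in> P" "Suc i \<in> B" by blast
  have f: "finite B" using finite_block[OF P B(1)] .
  have c: "cp B (Suc i) = i" using pp_block[OF P B] e by simp
  show ?thesis
  proof (cases "\<exists>y\<in>B. y < Suc i")
    case True
    then have "Max {y\<in>B. y < Suc i} \<in> {y\<in>B. y < Suc i}" using f by (intro Max_in) auto
    moreover have "Max {y\<in>B. y < Suc i} = i" using c True unfolding cp_def by simp
    ultimately have "i \<in> B" by simp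
    then show ?thesis using B by blast
  next
    case False
    then have "Max B = i" using c unfolding cp_def by auto
    moreover have "Suc i \<le> Max B" using f B(2) by simp
    ultimately show ?thesis by simp
  qed
qed

lemma NC_I: "partition_on {1..n} P \<Longrightarrow> noncrossing P \<Longrightarrow> partition_perm P \<in> NC n"
  unfolding NC_def set_partition_def by blast

lemma NC_E: "\<sigma> \<in> NC n \<Longrightarrow> \<exists>P. \<sigma> = partition_perm P \<and> partition_on {1..n} P \<and> noncrossing P"
  unfolding NC_def set_partition_def by blast

lemma st_inv: "simple_transp i \<circ> simple_transp i = id"
  unfolding simple_transp_def by simp

lemma step_closed:
  assumes P: "partition_on {1..n} P" and nc: "noncrossing P" and i: "1 \<le> i" "i < n"
    and c: "i \<in> {partition_perm P i, partition_perm P (Suc i)}"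
  shows "partition_perm P \<circ> simple_transp i \<in> NC n"
proof -
  from c consider "partition_perm P i = i" | "partition_perm P (Suc i) = i" by auto
  then show ?thesis
  proof cases
    case 1
    have iP: "{i} \<in> P" using pp_fix[OF P _ 1] i by auto
    have "Suc i \<in> \<Union>P" using partition_onD1[OF P] i by auto
    then obtain B where B: "B \<in> P" "Suc i \<in> B" by blast
    have "partition_perm (merge P i B) = partition_perm P \<circ> simple_transp i"
      using merge_pp[OF P _ iP B] by simp
    moreover have "partition_perm (merge P i B) \<in> NC n"
      using NC_I[OF merge_partition[OF P iP B] merge_nc[OF P iP B nc]] .
    ultimately show ?thesis by simp
  next
    case 2
    obtain B where B: "B \<in> P" "i \<in> B" "Suc i \<in> B" using pp_pred[OF P _ 2] i by auto
    note sf = split_facts[OF P B]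
    have "partition_perm P = partition_perm (splitb P i B) \<circ> simple_transp i"
      using merge_pp[OF sf(1) _ sf(2) sf(3) sf(4)] sf(5) by simp
    then have "partition_perm P \<circ> simple_transp i = partition_perm (splitb P i B)"
      by (simp add: comp_assoc st_inv)
    moreover have "partition_perm (splitb P i B) \<in> NC n"
      using NC_I[OF sf(1) split_nc[OF P B(1,2) nc]] .
    ultimately show ?thesis by simp
  qed
qed

definition P0 :: "nat \<Rightarrow> nat set set" where "P0 n = (\<lambda>x. {x}) ` {1..n}"

lemma P0_part: "partition_on {1..n} (P0 n)"
  unfolding P0_def by (rule partition_onI) (auto simp: disjnt_def)

lemma P0_nc: "noncrossing (P0 n)"
  unfolding P0_def noncrossing_def by auto

lemma P0_pp: "partition_perm (P0 n) = id"
proof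
  fix x
  show "partition_perm (P0 n) x = id x"
  proof (cases "x \<in> {1..n}")
    case True
    then show ?thesis using pp_block[OF P0_part[of n], of "{x}" x] unfolding P0_def by auto
  next
    case False
    then show ?thesis using pp_out[of x "P0 n"] unfolding P0_def by auto
  qed
qed

lemma id_NC: "id \<in> NC n"
  using NC_I[OF P0_part[of n] P0_nc[of n]] P0_pp[of n] by simp

lemma sub_dir:
  assumes "(id, \<sigma>) \<in> ({(a, b). nc_step n a b} \<union> {(a, b). nc_step n b a})\<^sup>*"
  shows "\<sigma> \<in> NC n"
  using assms
proof (induction rule: rtrancl_induct)
  case base
  show ?case by (rule id_NC)
next
  case (step y z)
  from NC_E[OF step.IH] obtain P where P: "y = partition_perm P" "partition_on {1..n} P" "noncrossing P"
    by blast
  from step.hyps(2) show ?case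
  proof
    assume "(y, z) \<in> {(a, b). nc_step n a b}"
    then obtain i where i: "1 \<le> i" "i < n" "i \<in> {y i, y (Suc i)}" "z = y \<circ> simple_transp i"
      unfolding nc_step_def by auto
    have "partition_perm P \<circ> simple_transp i \<in> NC n"
      by (rule step_closed[OF P(2,3) i(1,2)]) (use i(3) P(1) in simp)
    then show ?thesis unfolding i(4) P(1) .
  next
    assume "(y, z) \<in> {(a, b). nc_step n b a}"
    then obtain i where i: "1 \<le> i" "i < n" "i \<in> {z i, z (Suc i)}" "y = z \<circ> simple_transp i"
      unfolding nc_step_def by auto
    then have "y \<circ> simple_transp i = z \<circ> (simple_transp i \<circ> simple_transp i)" by (simp add: comp_assoc)
    then have zy: "z = y \<circ> simple_transp i" by (simp add: st_inv)
    have "y i = z (Suc i)" "y (Suc i) = z i" using i(4) by (auto simp: simple_transp_def)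
    then have "i \<in> {y i, y (Suc i)}" using i(3) by auto
    then have "partition_perm P \<circ> simple_transp i \<in> NC n"
      by (intro step_closed[OF P(2,3) i(1,2)]) (use P(1) in simp)
    then show ?thesis unfolding zy P(1) .
  qed
qed


definition w :: "nat set \<Rightarrow> nat" where "w B = Max B - Min B"
definition W :: "nat set set \<Rightarrow> nat" where "W P = (\<Sum>B\<in>P. w B)"
definition S :: "nat set set \<Rightarrow> nat" where "S P = card {B\<in>P. card B = 1}"

lemma w_single[simp]: "w {x} = 0" unfolding w_def by simp

lemma finite_P: "partition_on {1..(n::nat)} P \<Longrightarrow> finite P"
proof -
  assume a: "partition_on {1..(n::nat)} P"
  have "P \<subseteq> Pow {1..n}" using partition_onD1[OF a] by auto
  then show "finite P" by (rule finite_subset) simp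
qed

lemma W_merge:
  assumes f: "finite P" and iP: "{i} \<in> P" and BP: "B \<in> P" and ne: "{i} \<noteq> B"
    and ni: "insert i B \<notin> P - {{i}, B}"
  shows "W (merge P i B) + w {i} + w B = W P + w (insert i B)"
proof -
  have "W P = w {i} + (\<Sum>X\<in>P - {{i}}. w X)" unfolding W_def using f iP by (rule sum.remove)
  also have "(\<Sum>X\<in>P - {{i}}. w X) = w B + (\<Sum>X\<in>P - {{i}} - {B}. w X)"
    using f BP ne by (intro sum.remove) auto
  finally have 1: "W P = w {i} + (w B + (\<Sum>X\<in>P - {{i}, B}. w X))"
    by (simp add: Diff_insert2[symmetric] insert_commute)
  have "W (merge P i B) = w (insert i B) + (\<Sum>X\<in>P - {{i}, B}. w X)"
    unfolding W_def merge_def using f ni by (intro sum.insert) auto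
  then show ?thesis using 1 by simp
qed

lemma W_split:
  assumes f: "finite P" and BP: "B \<in> P" and n1: "{i} \<notin> P - {B}"
    and n2: "B - {i} \<notin> insert {i} (P - {B})"
  shows "W (splitb P i B) + w B = W P + w (B - {i}) + w {i}"
proof -
  have "W P = w B + (\<Sum>X\<in>P - {B}. w X)" unfolding W_def using f BP by (rule sum.remove)
  moreover have "W (splitb P i B) = w (B - {i}) + (w {i} + (\<Sum>X\<in>P - {B}. w X))"
    unfolding W_def splitb_def using f n1 n2 by (simp add: sum.insert)
  ultimately show ?thesis by simp
qed

lemma reach:
  assumes "partition_on {1..n} P" "noncrossing P"
  shows "partition_perm P permutes {1..n} \<and>
    (id, partition_perm P) \<in> ({(a, b). nc_step n a b} \<union> {(a, b). nc_step n b a})\<^sup>*"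
  using assms
proof (induction "3 * W P + S P" arbitrary: P rule: less_induct)
  case less
  note P = less.prems(1) and nc = less.prems(2)
  let ?R = "{(a, b). nc_step n a b} \<union> {(a, b). nc_step n b a}"
  have fP: "finite P" using finite_P[OF P] .
  have u: "\<And>C D x. C \<in> P \<Longrightarrow> D \<in> P \<Longrightarrow> x \<in> C \<Longrightarrow> x \<in> D \<Longrightarrow> C = D"
    using part_unique[OF P] by blast
  show ?case
  proof (cases "\<forall>B\<in>P. card B = 1")
    case True
    have "partition_perm P = id"
    proof
      fix x
      show "partition_perm P x = id x"
      proof (cases "x \<in> \<Union>P")
        case True2: True
        then obtain B where B: "B \<in> P" "x \<in> B" by auto
        have "card B = 1" using True B(1) by blast
        then obtain y where "B = {y}" by (rule card_1_singletonE)
        then have "B = {x}" using B(2) by simp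
        then show ?thesis using pp_block[OF P B] by simp
      qed (simp add: pp_out)
    qed
    then show ?thesis by (simp add: permutes_id)
  next
    case False
    then obtain B0 where B0: "B0 \<in> P" "card B0 \<noteq> 1" by auto
    obtain B where B: "B \<in> P" "card B \<noteq> 1" and Bmin: "\<And>C. C \<in> P \<Longrightarrow> card C \<noteq> 1 \<Longrightarrow> w B \<le> w C"
      using ex_has_least_nat[of "\<lambda>B. B \<in> P \<and> card B \<noteq> 1" B0 w] B0 by blast
    have fB: "finite B" using finite_block[OF P B(1)] .
    have Bne: "B \<noteq> {}" using partition_onD3[OF P] B(1) by auto
    define a where "a = Min B"
    have aB: "a \<in> B" unfolding a_def using fB Bne by simp
    have Ba: "B - {a} \<noteq> {}"
    proof
      assume "B - {a} = {}"
      then have "B = {a}" using aB by blast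
      then show False using B(2) by simp
    qed
    define b where "b = Min (B - {a})"
    have bB: "b \<in> B" "b \<noteq> a" unfolding b_def using fB Ba Min_in[of "B - {a}"] by auto
    have "a \<le> b" unfolding a_def using fB bB(1) by simp
    then have ab: "a < b" using bB(2) by simp
    have between: "\<And>y. y \<in> B \<Longrightarrow> a < y \<Longrightarrow> b \<le> y" unfolding b_def using fB by auto
    have bmax: "b \<le> Max B" using bB fB by simp
    have BA: "B \<subseteq> {1..n}" using partition_onD1[OF P] B(1) by auto
    have a1: "1 \<le> a" and bn: "b \<le> n" using aB bB BA by auto
    show ?thesis
    proof (cases "b = Suc a")
      case True
      have sB: "Suc a \<in> B" using bB True by simp
      note sf = split_facts[OF P B(1) aB sB]
      let ?Q = "splitb P a B"
      have n1: "{a} \<notin> P - {B}" using u[OF _ B(1), of "{a}" a] aB by auto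
      have n2: "B - {a} \<notin> insert {a} (P - {B})" using u[OF _ B(1), of "B - {a}" "Suc a"] sB by auto
      have WQ: "W ?Q + w B = W P + w (B - {a}) + w {a}" using W_split[OF fP B(1) n1 n2] .
      have "Max (B - {a}) \<le> Max B" using fB Ba by (simp add: Max_mono)
      then have "w (B - {a}) < w B" unfolding w_def using bmax ab by (simp add: b_def[symmetric] a_def[symmetric])
      then have W1: "W ?Q < W P" using WQ by simp
      have "{X \<in> ?Q. card X = 1} \<subseteq> insert (B - {a}) (insert {a} {X\<in>P. card X = 1})"
        unfolding splitb_def by auto
      then have "S ?Q \<le> card (insert (B - {a}) (insert {a} {X\<in>P. card X = 1}))"
        unfolding S_def using fP by (intro card_mono) auto
      also have "\<dots> \<le> S P + 2"
      proof -
        have fS: "finite {X\<in>P. card X = 1}" using fP by simp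
        have "card (insert {a} {X\<in>P. card X = 1}) \<le> Suc (card {X\<in>P. card X = 1})"
          using fS by (simp add: card_insert_if)
        moreover have "card (insert (B - {a}) (insert {a} {X\<in>P. card X = 1})) \<le> Suc (card (insert {a} {X\<in>P. card X = 1}))"
          using fS by (simp add: card_insert_if)
        ultimately show ?thesis unfolding S_def by simp
      qed
      finally have "3 * W ?Q + S ?Q < 3 * W P + S P" using W1 by simp
      then have IH: "partition_perm ?Q permutes {1..n} \<and> (id, partition_perm ?Q) \<in> ?R\<^sup>*"
        using less.hyps sf(1) split_nc[OF P B(1) aB nc] by blast
      have eq: "partition_perm P = partition_perm ?Q \<circ> simple_transp a"
        using merge_pp[OF sf(1) _ sf(2) sf(3) sf(4)] sf(5) by simp
      have fixa: "partition_perm ?Q a = a" using pp_block[OF sf(1) sf(2)] by simp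
      have an: "a < n" using True bn by simp
      have "nc_step n (partition_perm ?Q) (partition_perm P)"
        unfolding nc_step_def using IH a1 an fixa eq by auto
      moreover have "partition_perm P permutes {1..n}"
        unfolding eq simple_transp_def
        by (rule permutes_compose[OF permutes_swap_id IH[THEN conjunct1]]) (use a1 an in auto)
      moreover have "(partition_perm ?Q, partition_perm P) \<in> ?R" using calculation(1) by blast
      ultimately show ?thesis using rtrancl_into_rtrancl[OF IH[THEN conjunct2]] by blast
    next
      case False
      define c where "c = b - 1"
      have ac: "a < c" "c < b" and sc: "Suc c = b" using False ab unfolding c_def by auto
      have cB: "c \<notin> B" using between[of c] ac by auto
      have "c \<in> {1..n}" using ac a1 bn by auto
      moreover have eqU: "\<Union>P = {1..n}" using partition_onD1[OF P] by simp
      ultimately have "c \<in> \<Union>P" by simp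
      then obtain C where C: "C \<in> P" "c \<in> C" by blast
      have CB: "C \<noteq> B" using C cB by auto
      have inside: "a < e \<and> e < b" if e: "e \<in> C" for e
      proof (cases "e = c")
        case True then show ?thesis using ac by simp
      next
        case False
        have "e \<noteq> a" "e \<noteq> b" using u[OF C(1) B(1)] e CB aB bB by auto
        moreover have "\<not> e < a"
        proof
          assume "e < a"
          then show False using ncD[OF nc C(1) B(1) CB e C(2) aB bB(1) _ ac(1) ac(2)] by blast
        qed
        moreover have "\<not> b < e"
        proof
          assume "b < e"
          then show False using ncD[OF nc B(1) C(1) CB[symmetric] aB bB(1) C(2) e ac(1) ac(2)] by blast
        qed
        ultimately show ?thesis by auto
      qed
      have fC: "finite C" using finite_block[OF P C(1)] .
      have Cc: "C = {c}"
      proof (rule ccontr)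
        assume "C \<noteq> {c}"
        have "card C \<noteq> 1"
        proof
          assume "card C = 1"
          then obtain y where "C = {y}" by (rule card_1_singletonE)
          then show False using C(2) \<open>C \<noteq> {c}\<close> by simp
        qed
        then have le: "w B \<le> w C" using Bmin C(1) by simp
        have "Max C \<in> C" "Min C \<in> C" using fC C(2) by (auto intro: Max_in Min_in)
        then have "Max C < b" "a < Min C" using inside by blast+
        moreover have "w B = Max B - a" unfolding w_def a_def by simp
        ultimately show False using le bmax ab unfolding w_def by arith
      qed
      have cP: "{c} \<in> P" using C Cc by simp
      have sB: "Suc c \<in> B" using sc bB by simp
      let ?Q = "merge P c B"
      have Qp: "partition_on {1..n} ?Q" using merge_partition[OF P cP B(1) sB] .
      have Qnc: "noncrossing ?Q" using merge_nc[OF P cP B(1) sB nc] .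
      have ne: "{c} \<noteq> B" using cB by auto
      have ni: "insert c B \<notin> P - {{c}, B}" using u[OF _ cP, of "insert c B" c] ab aB by auto
      have WQ: "W ?Q + w {c} + w B = W P + w (insert c B)" using W_merge[OF fP cP B(1) ne ni] .
      have "Max (insert c B) = Max B" using fB Bne ac bmax by simp
      moreover have "Min (insert c B) = Min B"
      proof -
        have "Min (insert c B) = min c (Min B)" using fB Bne by (rule Min_insert)
        then show ?thesis using ac(1) unfolding a_def by simp
      qed
      ultimately have "w (insert c B) = w B" unfolding w_def by simp
      then have W1: "W ?Q = W P" using WQ by simp
      have cardB': "card (insert c B) \<noteq> 1"
      proof
        assume "card (insert c B) = 1"
        then obtain y where "insert c B = {y}" by (rule card_1_singletonE)
        then show False using aB bB ab by auto
      qed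
      have "{X \<in> ?Q. card X = 1} = {X\<in>P. card X = 1} - {{c}}"
        unfolding merge_def using cardB' B(2) cB bB(1) by auto
      moreover have "card ({X\<in>P. card X = 1} - {{c}}) < card {X\<in>P. card X = 1}"
        using fP cP by (intro card_Diff1_less) auto
      ultimately have "S ?Q < S P" unfolding S_def by simp
      then have "3 * W ?Q + S ?Q < 3 * W P + S P" using W1 by simp
      then have IH: "partition_perm ?Q permutes {1..n} \<and> (id, partition_perm ?Q) \<in> ?R\<^sup>*"
        using less.hyps Qp Qnc by blast
      have "partition_perm ?Q = partition_perm P \<circ> simple_transp c"
        using merge_pp[OF P _ cP B(1) sB] by simp
      then have eq: "partition_perm P = partition_perm ?Q \<circ> simple_transp c"
        by (simp add: comp_assoc st_inv)
      have BQ: "insert c B \<in> ?Q" unfolding merge_def by simp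
      have predc: "partition_perm ?Q (Suc c) = c"
        using pp_block[OF Qp BQ, of "Suc c"] cp_insert_Suc[OF fB cB sB] sB by simp
      have c1: "1 \<le> c" and cn: "c < n" using ac a1 bn by auto
      have "nc_step n (partition_perm ?Q) (partition_perm P)"
        unfolding nc_step_def using IH c1 cn predc eq by auto
      moreover have "partition_perm P permutes {1..n}"
        unfolding eq simple_transp_def
        by (rule permutes_compose[OF permutes_swap_id IH[THEN conjunct1]]) (use c1 cn in auto)
      moreover have "(partition_perm ?Q, partition_perm P) \<in> ?R" using calculation(1) by blast
      ultimately show ?thesis using rtrancl_into_rtrancl[OF IH[THEN conjunct2]] by blast
    qed
  qed
qed

theorem corollary7p9:
  fixes n :: nat
  shows "{\<sigma>. nc_equiv n id \<sigma>} = NC n"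
proof
  show "{\<sigma>. nc_equiv n id \<sigma>} \<subseteq> NC n"
    using sub_dir unfolding nc_equiv_def by blast
  show "NC n \<subseteq> {\<sigma>. nc_equiv n id \<sigma>}"
  proof
    fix \<sigma> assume "\<sigma> \<in> NC n"
    then obtain P where P: "\<sigma> = partition_perm P" "partition_on {1..n} P" "noncrossing P"
      unfolding NC_def set_partition_def by auto
    then show "\<sigma> \<in> {\<sigma>. nc_equiv n id \<sigma>}"
      using reach[OF P(2,3)] unfolding nc_equiv_def by (auto simp: permutes_id)
  qed
qed

end
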